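(* Let $\mathfrak{R}=(G,G',S,\phi,\rho,\delta)$ be a reconciliation, $s\in V(S)\setminus L(S)$, and $x\in V(G')\setminus L(G')$ with $\rho(x)=s$. Then $x\in\Sigma(\mathfrak{R})$ if and only if $x$ is a minimal element of $\rho^{-1}(s)$ (with respect to the ancestor order of $G'$).
   Context: All trees are rooted binary trees whose root node has degree 1; every other non-leaf node $x$ has exactly two children $x_l,x_r$; $L(T)$ denotes leaves (root excluded). For nodes of a rooted tree, $y\le x$ means $x$ lies on the path from $y$ to the root. $G$ is a gene tree, $S$ a species tree, $\phi:L(G)\to L(S)$. A tree $G'$ is an extension of $G$ if $G$ is obtained from $G'$ by pruning some subtrees and suppressing degree-2 nodes. A map $\rho:V(G')\to V(S)$ is consistent with $S$ if $\rho(root(G'))=root(S)$ and every node $x$ of $G'$ with two children satisfies (D) $\rho(x)=\rho(x_l)=\rho(x_r)$ or (S) $\rho(x)_l=\rho(x_l)$ and $\rho(x)_r=\rho(x_r)$. A reconciliation $\mathfrak{R}=(G,G',S,\phi,\rho,\delta)$ consists of an extension $G'$ of $G$, a consistent $\rho$ with $\rho|_{L(G)}=\phi$, and an injective partial function $\delta$ from duplications to losses ($L(G')\setminus L(G)$) with $\rho(x)=\rho(\delta(x))$. $\Delta(\mathfrak{R})$ (duplications) is the set of nodes with two children satisfying (D), $\Sigma(\mathfrak{R})$ (speciations) those satisfying (S). *)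

theory Defs
  imports Main
begin

text \<open>Binary phylogenetic trees: the root has exactly one child, every
  other node has either 0 (leaf) or 2 children (left child = index 0, right = index 1).\<close>

record 'a rtree =
  nodes :: "'a set"
  root  :: "'a"
  ch    :: "'a \<Rightarrow> 'a list"

definition edges :: "'a rtree \<Rightarrow> ('a \<times> 'a) set" where
  "edges T = {(p, c). p \<in> nodes T \<and> c \<in> set (ch T p)}"

definition leaves :: "'a rtree \<Rightarrow> 'a set" where
  "leaves T = {v \<in> nodes T. v \<noteq> root T \<and> ch T v = []}"

text \<open>\<open>anc_le T y x\<close>: \<open>y \<le> x\<close>, i.e. x lies on the path from y to the root.\<close>
definition anc_le :: "'a rtree \<Rightarrow> 'a \<Rightarrow> 'a \<Rightarrow> bool" where
  "anc_le T y x \<longleftrightarrow> (x, y) \<in> (edges T)\<^sup>*"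

definition rooted_tree :: "'a rtree \<Rightarrow> bool" where
  "rooted_tree T \<longleftrightarrow> finite (nodes T) \<and> root T \<in> nodes T
     \<and> (\<forall>v. v \<notin> nodes T \<longrightarrow> ch T v = [])
     \<and> (\<forall>v\<in>nodes T. set (ch T v) \<subseteq> nodes T \<and> distinct (ch T v))
     \<and> (\<forall>p\<in>nodes T. root T \<notin> set (ch T p))
     \<and> (\<forall>v\<in>nodes T. v \<noteq> root T \<longrightarrow> (\<exists>!p. p \<in> nodes T \<and> v \<in> set (ch T p)))
     \<and> (\<forall>v\<in>nodes T. (root T, v) \<in> (edges T)\<^sup>*)"

definition binary_tree :: "'a rtree \<Rightarrow> bool" where
  "binary_tree T \<longleftrightarrow> rooted_tree T \<and> length (ch T (root T)) = 1
     \<and> (\<forall>v\<in>nodes T - {root T}. length (ch T v) = 0 \<or> length (ch T v) = 2)"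

definition prune_step :: "'a rtree \<Rightarrow> 'a rtree \<Rightarrow> bool" where
  "prune_step T T' \<longleftrightarrow> (\<exists>v\<in>nodes T. v \<noteq> root T \<and>
     (let R = {u. (v, u) \<in> (edges T)\<^sup>*} in
      T' = \<lparr>nodes = nodes T - R, root = root T,
            ch = (\<lambda>w. if w \<in> R then [] else filter (\<lambda>c. c \<noteq> v) (ch T w))\<rparr>))"

definition suppress_step :: "'a rtree \<Rightarrow> 'a rtree \<Rightarrow> bool" where
  "suppress_step T T' \<longleftrightarrow> (\<exists>v\<in>nodes T. v \<noteq> root T \<and> (\<exists>c. ch T v = [c] \<and>
      T' = \<lparr>nodes = nodes T - {v}, root = root T,
            ch = (\<lambda>w. if w = v then [] else map (\<lambda>u. if u = v then c else u) (ch T w))\<rparr>))"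

definition extension :: "'a rtree \<Rightarrow> 'a rtree \<Rightarrow> bool" where
  "extension G' G \<longleftrightarrow> binary_tree G \<and> binary_tree G' \<and> leaves G \<subseteq> leaves G'
     \<and> (G', G) \<in> {(A, B). prune_step A B \<or> suppress_step A B}\<^sup>*"

definition inner2 :: "'a rtree \<Rightarrow> 'a \<Rightarrow> bool" where
  "inner2 T x \<longleftrightarrow> x \<in> nodes T \<and> length (ch T x) = 2"

definition cond_D :: "'g rtree \<Rightarrow> ('g \<Rightarrow> 's) \<Rightarrow> 'g \<Rightarrow> bool" where
  "cond_D G' \<rho> x \<longleftrightarrow> \<rho> x = \<rho> (ch G' x ! 0) \<and> \<rho> x = \<rho> (ch G' x ! 1)"

definition cond_S :: "'g rtree \<Rightarrow> 's rtree \<Rightarrow> ('g \<Rightarrow> 's) \<Rightarrow> 'g \<Rightarrow> bool" where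
  "cond_S G' S \<rho> x \<longleftrightarrow> ch S (\<rho> x) = [\<rho> (ch G' x ! 0), \<rho> (ch G' x ! 1)]"

definition consistent :: "'g rtree \<Rightarrow> 's rtree \<Rightarrow> ('g \<Rightarrow> 's) \<Rightarrow> bool" where
  "consistent G' S \<rho> \<longleftrightarrow> \<rho> ` nodes G' \<subseteq> nodes S \<and> \<rho> (root G') = root S
     \<and> (\<forall>x. inner2 G' x \<longrightarrow> cond_D G' \<rho> x \<or> cond_S G' S \<rho> x)"

definition Dup :: "'g rtree \<Rightarrow> ('g \<Rightarrow> 's) \<Rightarrow> 'g set" where
  "Dup G' \<rho> = {x. inner2 G' x \<and> cond_D G' \<rho> x}"

definition Spec :: "'g rtree \<Rightarrow> 's rtree \<Rightarrow> ('g \<Rightarrow> 's) \<Rightarrow> 'g set" where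
  "Spec G' S \<rho> = {x. inner2 G' x \<and> cond_S G' S \<rho> x}"

definition reconciliation ::
  "'g rtree \<Rightarrow> 'g rtree \<Rightarrow> 's rtree \<Rightarrow> ('g \<Rightarrow> 's) \<Rightarrow> ('g \<Rightarrow> 's) \<Rightarrow> ('g \<rightharpoonup> 'g) \<Rightarrow> bool" where
  "reconciliation G G' S \<phi> \<rho> \<delta> \<longleftrightarrow>
     binary_tree G \<and> binary_tree S \<and> \<phi> ` leaves G \<subseteq> leaves S
     \<and> extension G' G \<and> consistent G' S \<rho> \<and> (\<forall>l\<in>leaves G. \<rho> l = \<phi> l)
     \<and> dom \<delta> \<subseteq> Dup G' \<rho> \<and> ran \<delta> \<subseteq> leaves G' - leaves G \<and> inj_on \<delta> (dom \<delta>)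
     \<and> (\<forall>x\<in>dom \<delta>. \<rho> x = \<rho> (the (\<delta> x)))"

definition minimal_preimage :: "'g rtree \<Rightarrow> ('g \<Rightarrow> 's) \<Rightarrow> 's \<Rightarrow> 'g \<Rightarrow> bool" where
  "minimal_preimage G' \<rho> s x \<longleftrightarrow> x \<in> nodes G' \<and> \<rho> x = s
     \<and> \<not> (\<exists>y\<in>nodes G'. \<rho> y = s \<and> anc_le G' y x \<and> y \<noteq> x)"

end

theory Submission
  imports Defs
begin

lemma edges_nodes: "(p,c) \<in> edges T \<Longrightarrow> rooted_tree T \<Longrightarrow> p \<in> nodes T \<and> c \<in> nodes T"
  unfolding edges_def rooted_tree_def by auto

lemma rt_root_reach: "rooted_tree T \<Longrightarrow> v \<in> nodes T \<Longrightarrow> (root T, v) \<in> (edges T)\<^sup>*"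
  unfolding rooted_tree_def by blast

lemma rt_uniq: "rooted_tree T \<Longrightarrow> v \<in> nodes T \<Longrightarrow> v \<noteq> root T \<Longrightarrow>
   p \<in> nodes T \<Longrightarrow> v \<in> set (ch T p) \<Longrightarrow> q \<in> nodes T \<Longrightarrow> v \<in> set (ch T q) \<Longrightarrow> p = q"
  unfolding rooted_tree_def by blast

lemma set2: "length xs = 2 \<Longrightarrow> c \<in> set xs \<Longrightarrow> c = xs ! 0 \<or> c = xs ! 1"
  by (cases xs; cases "tl xs"; auto)

lemma bt_len: "binary_tree T \<Longrightarrow> v \<in> nodes T \<Longrightarrow> v \<noteq> root T \<Longrightarrow> length (ch T v) = 0 \<or> length (ch T v) = 2"
  unfolding binary_tree_def by blast

lemma no_cycle_aux:
  assumes T: "rooted_tree T" and r: "(root T, c) \<in> (edges T)\<^sup>*"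
  shows "(c,c) \<notin> (edges T)\<^sup>+"
  using r
proof (induction rule: rtrancl_induct)
  case base
  show ?case
  proof
    assume "(root T, root T) \<in> (edges T)\<^sup>+"
    then obtain p where "(p, root T) \<in> edges T" by (meson tranclD2)
    then show False using T unfolding edges_def unfolding rooted_tree_def by auto
  qed
next
  case (step b c)
  show ?case
  proof
    assume "(c,c) \<in> (edges T)\<^sup>+"
    then obtain p where cp: "(c,p) \<in> (edges T)\<^sup>*" and pc: "(p,c) \<in> edges T"
      by (meson tranclD2)
    have cr: "c \<noteq> root T" using pc T unfolding edges_def unfolding rooted_tree_def by auto
    have cn: "c \<in> nodes T" using pc T edges_nodes by metis
    have pn: "p \<in> nodes T" and bn: "b \<in> nodes T" using pc step(2) T edges_nodes by metis+
    have "c \<in> set (ch T p)" "c \<in> set (ch T b)" using pc step(2) unfolding edges_def by fastforce+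
    then have "p = b" using rt_uniq[OF T cn cr pn _ bn] by blast
    then have "(b,b) \<in> (edges T)\<^sup>+" using cp step(2)
      by (meson rtrancl_into_trancl2)
    then show False using step(3) by blast
  qed
qed

lemma no_cycle:
  assumes T: "rooted_tree T" and c: "c \<in> nodes T"
  shows "(c,c) \<notin> (edges T)\<^sup>+"
  using no_cycle_aux[OF T rt_root_reach[OF T c]] .

lemma mono_rho:
  assumes T: "binary_tree G'" and S: "rooted_tree S" and C: "consistent G' S \<rho>"
    and xy: "(x,y) \<in> (edges G')\<^sup>*" and x: "x \<in> nodes G'"
  shows "(\<rho> x, \<rho> y) \<in> (edges S)\<^sup>*"
  using xy
proof (induction rule: rtrancl_induct)
  case base then show ?case by simp
next
  case (step b c)
  have RT: "rooted_tree G'" using T unfolding binary_tree_def by blast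
  have bn: "b \<in> nodes G'" and cn: "c \<in> nodes G'" using step(2) RT edges_nodes by metis+
  have cch: "c \<in> set (ch G' b)" using step(2) unfolding edges_def by fastforce
  have "(\<rho> b, \<rho> c) \<in> (edges S)\<^sup>*"
  proof (cases "b = root G'")
    case True
    then have "\<rho> b = root S" using C True unfolding consistent_def by simp
    moreover have "\<rho> c \<in> nodes S" using C cn unfolding consistent_def by blast
    ultimately show ?thesis using rt_root_reach[OF S] by simp
  next
    case False
    then have "length (ch G' b) = 0 \<or> length (ch G' b) = 2" using bt_len[OF T bn] by blast
    then have l2: "length (ch G' b) = 2" using cch by auto
    then have i2: "inner2 G' b" using bn unfolding inner2_def by blast
    have c01: "c = ch G' b ! 0 \<or> c = ch G' b ! 1" using set2[OF l2 cch] .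
    have "cond_D G' \<rho> b \<or> cond_S G' S \<rho> b" using C i2 unfolding consistent_def by blast
    then show ?thesis
    proof
      assume "cond_D G' \<rho> b" then have "\<rho> c = \<rho> b" using c01 unfolding cond_D_def by auto
      then show ?thesis by simp
    next
      assume cs: "cond_S G' S \<rho> b"
      have "\<rho> b \<in> nodes S" using C bn unfolding consistent_def by blast
      moreover have "\<rho> c \<in> set (ch S (\<rho> b))" using cs c01 unfolding cond_S_def by auto
      ultimately show ?thesis unfolding edges_def by blast
    qed
  qed
  then show ?case using step(3) by simp
qed

theorem lemma3:
  assumes "reconciliation G G' S \<phi> \<rho> \<delta>"
    and "s \<in> nodes S - leaves S"
    and "x \<in> nodes G' - leaves G'" and "x \<noteq> root G'"
    and "\<rho> x = s"
  shows "x \<in> Spec G' S \<rho> \<longleftrightarrow> minimal_preimage G' \<rho> s x"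
proof -
  have BS: "binary_tree S" and C: "consistent G' S \<rho>" and E: "extension G' G"
    using assms(1) unfolding reconciliation_def by blast+
  have BG: "binary_tree G'" using E unfolding extension_def by blast
  have RS: "rooted_tree S" using BS unfolding binary_tree_def by blast
  have RG: "rooted_tree G'" using BG unfolding binary_tree_def by blast
  have xn: "x \<in> nodes G'" using assms(3) by blast
  have "length (ch G' x) = 0 \<or> length (ch G' x) = 2" using bt_len[OF BG xn assms(4)] .
  moreover have "ch G' x \<noteq> []" using assms(3,4) unfolding leaves_def by blast
  ultimately have l2: "length (ch G' x) = 2" by auto
  have i2: "inner2 G' x" using xn l2 unfolding inner2_def by blast
  have sn: "s \<in> nodes S" using assms(2) by blast
  show ?thesis
  proof
    assume sp: "x \<in> Spec G' S \<rho>"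
    then have cs: "ch S s = [\<rho> (ch G' x ! 0), \<rho> (ch G' x ! 1)]"
      using assms(5) unfolding Spec_def cond_S_def by simp
    show "minimal_preimage G' \<rho> s x"
      unfolding minimal_preimage_def
    proof (intro conjI xn assms(5) notI)
      assume "\<exists>y\<in>nodes G'. \<rho> y = s \<and> anc_le G' y x \<and> y \<noteq> x"
      then obtain y where yn: "y \<in> nodes G'" and ys: "\<rho> y = s" and xy: "(x,y) \<in> (edges G')\<^sup>*"
        and yx: "y \<noteq> x" unfolding anc_le_def by blast
      then have "(x,y) \<in> (edges G')\<^sup>+" using xy yx rtranclD[OF xy] by blast
      then obtain c where xc: "(x,c) \<in> edges G'" and cy: "(c,y) \<in> (edges G')\<^sup>*"
        by (meson tranclD)
      have cch: "c \<in> set (ch G' x)" using xc unfolding edges_def by fastforce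
      have cn: "c \<in> nodes G'" using xc RG edges_nodes by metis
      have c01: "c = ch G' x ! 0 \<or> c = ch G' x ! 1" using set2[OF l2 cch] .
      have "\<rho> c \<in> set (ch S s)" using cs c01 by auto
      then have e: "(s, \<rho> c) \<in> edges S" using sn unfolding edges_def by fastforce
      have "(\<rho> c, s) \<in> (edges S)\<^sup>*" using mono_rho[OF BG RS C cy cn] ys by simp
      then have "(s,s) \<in> (edges S)\<^sup>+" using e by (meson rtrancl_into_trancl2)
      then show False using no_cycle[OF RS sn] by blast
    qed
  next
    assume mp: "minimal_preimage G' \<rho> s x"
    show "x \<in> Spec G' S \<rho>"
    proof (rule ccontr)
      assume "x \<notin> Spec G' S \<rho>"
      then have "\<not> cond_S G' S \<rho> x" using i2 unfolding Spec_def by blast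
      then have "cond_D G' \<rho> x" using C i2 unfolding consistent_def by blast
      then have cs: "\<rho> (ch G' x ! 0) = s" using assms(5) unfolding cond_D_def by metis
      define c where "c = ch G' x ! 0"
      have cch: "c \<in> set (ch G' x)" using l2 unfolding c_def by simp
      then have e: "(x,c) \<in> edges G'" using xn unfolding edges_def by fastforce
      have cn: "c \<in> nodes G'" using e RG edges_nodes by metis
      have "c \<noteq> x" using e no_cycle[OF RG xn] by blast
      then show False using mp cn cs e unfolding minimal_preimage_def anc_le_def c_def
        by (metis r_into_rtrancl)
    qed
  qed
qed

end
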